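(* Let $\mathcal{A}=(Q,\gamma,W)$ be a one-dimensional pVASS and let $R\neq\emptyset$ be a type II region of $\mathcal{A}$. Then every configuration of $\mathit{pre}^*(R)$ can reach a configuration of $R$ in at most $4|Q|^3$ transitions.
   Context: A one-dimensional pVASS is $\mathcal{A}=(Q,\gamma,W)$ with $Q$ a finite set of control states, rules $\gamma\subseteq Q\times\{-1,0,1\}\times Q$ and weights $W:\gamma\to\mathbb{N}^+$. Configurations are $p(k)\in Q\times\mathbb{N}$. A rule $(p,\kappa,q)$ is enabled in $p(k)$ unless $\kappa=-1$ and $k=0$; a transition $p(k)\to q(k+\kappa)$ exists for each enabled rule, and a configuration with no enabled rule has only a self-loop. $\mathit{post}^*(X)$/$\mathit{pre}^*(X)$ are the sets of configurations reachable from / able to reach $X$. $\mathscr{C}_\mathcal{A}$ is the finite Markov chain on $Q$ with a transition $p\to q$ for each rule $(p,\kappa,q)$ (probability proportional to weight); BSCC = bottom strongly connected component. For $p$ in a BSCC of $\mathscr{C}_\mathcal{A}$, the type II region determined by $p$ is $\mathit{post}^*(p(0))$ if this set is infinite and contained in $\mathit{pre}^*(p(0))$, and $\emptyset$ otherwise. *)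

theory Defs
  imports Main
begin

(* A one-dimensional pVASS (Q, gamma, W): rules are triples (p, kappa, q) with kappa in {-1,0,1}.
   Configurations p(k) are pairs (p, k) :: 'q * nat. *)

definition pvass :: "'q set \<Rightarrow> ('q \<times> int \<times> 'q) set \<Rightarrow> ('q \<times> int \<times> 'q \<Rightarrow> nat) \<Rightarrow> bool" where
  "pvass Q \<gamma> W \<longleftrightarrow> finite Q \<and> \<gamma> \<subseteq> Q \<times> {-1, 0, 1} \<times> Q \<and> (\<forall>r\<in>\<gamma>. W r > 0)"

definition enabled :: "('q \<times> int \<times> 'q) \<Rightarrow> 'q \<times> nat \<Rightarrow> bool" where
  "enabled r c \<longleftrightarrow> (case r of (p, \<kappa>, q) \<Rightarrow> fst c = p \<and> \<not> (\<kappa> = -1 \<and> snd c = 0))"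

definition trans_rel :: "('q \<times> int \<times> 'q) set \<Rightarrow> (('q \<times> nat) \<times> ('q \<times> nat)) set" where
  "trans_rel \<gamma> =
     {((p, k), (q, nat (int k + \<kappa>))) | p k \<kappa> q. (p, \<kappa>, q) \<in> \<gamma> \<and> enabled (p, \<kappa>, q) (p, k)}
   \<union> {(c, c) | c. \<not> (\<exists>r\<in>\<gamma>. enabled r c)}"

definition post_star :: "'q set \<Rightarrow> ('q \<times> int \<times> 'q) set \<Rightarrow> ('q \<times> nat) set \<Rightarrow> ('q \<times> nat) set" where
  "post_star Q \<gamma> X = {c'. c' \<in> Q \<times> UNIV \<and> (\<exists>c\<in>X. (c, c') \<in> (trans_rel \<gamma>)\<^sup>*)}"

definition pre_star :: "'q set \<Rightarrow> ('q \<times> int \<times> 'q) set \<Rightarrow> ('q \<times> nat) set \<Rightarrow> ('q \<times> nat) set" where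
  "pre_star Q \<gamma> X = {c. c \<in> Q \<times> UNIV \<and> (\<exists>c'\<in>X. (c, c') \<in> (trans_rel \<gamma>)\<^sup>*)}"

(* edges of the finite Markov chain C_A (weights are positive, so the edge relation
   is exactly the set of pairs (p,q) joined by some rule) *)
definition chain_edges :: "('q \<times> int \<times> 'q) set \<Rightarrow> ('q \<times> 'q) set" where
  "chain_edges \<gamma> = {(p, q). \<exists>\<kappa>. (p, \<kappa>, q) \<in> \<gamma>}"

definition is_bscc :: "'q set \<Rightarrow> ('q \<times> int \<times> 'q) set \<Rightarrow> 'q set \<Rightarrow> bool" where
  "is_bscc Q \<gamma> C \<longleftrightarrow> C \<noteq> {} \<and> C \<subseteq> Q \<and>
     (\<forall>p\<in>C. \<forall>q\<in>C. (p, q) \<in> (chain_edges \<gamma>)\<^sup>*) \<and>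
     (\<forall>p\<in>C. \<forall>q. (p, q) \<in> chain_edges \<gamma> \<longrightarrow> q \<in> C)"

definition type2_region :: "'q set \<Rightarrow> ('q \<times> int \<times> 'q) set \<Rightarrow> 'q \<Rightarrow> ('q \<times> nat) set" where
  "type2_region Q \<gamma> p =
     (if infinite (post_star Q \<gamma> {(p, 0)}) \<and> post_star Q \<gamma> {(p, 0)} \<subseteq> pre_star Q \<gamma> {(p, 0)}
      then post_star Q \<gamma> {(p, 0)} else {})"

end

theory Submission
  imports Defs
begin

definition step :: "('q \<times> int \<times> 'q) set \<Rightarrow> (('q \<times> nat) \<times> ('q \<times> nat)) set" where
  "step \<gamma> = {((s,h),(s',h')). \<exists>\<kappa>. (s,\<kappa>,s') \<in> \<gamma> \<and> int h' = int h + \<kappa>}"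

definition stepB :: "('q \<times> int \<times> 'q) set \<Rightarrow> nat \<Rightarrow> (('q \<times> nat) \<times> ('q \<times> nat)) set" where
  "stepB \<gamma> B = {(x,y). (x,y) \<in> step \<gamma> \<and> B \<le> snd x \<and> B \<le> snd y}"

lemma stepB0: "stepB \<gamma> 0 = step \<gamma>"
  unfolding stepB_def by auto

lemma relpow_mono_set: "(R::('a\<times>'a) set) \<subseteq> S \<Longrightarrow> R ^^ n \<subseteq> S ^^ n"
  by (induction n) (simp_all add: relcomp_mono)

lemma stepB_mono: "B' \<le> B \<Longrightarrow> stepB \<gamma> B \<subseteq> stepB \<gamma> B'"
  unfolding stepB_def by auto

lemma stepB_sub: "stepB \<gamma> B \<subseteq> step \<gamma>"
  unfolding stepB_def by auto

lemma stepB_up: "(x,y) \<in> stepB \<gamma> B \<Longrightarrow> ((fst x, snd x + d),(fst y, snd y + d)) \<in> stepB \<gamma> (B+d)"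
  unfolding stepB_def step_def by (cases x; cases y) auto

lemma stepB_dn: "(x,y) \<in> stepB \<gamma> B \<Longrightarrow> d \<le> B \<Longrightarrow> ((fst x, snd x - d),(fst y, snd y - d)) \<in> stepB \<gamma> (B-d)"
  unfolding stepB_def step_def by (cases x; cases y) auto

lemma stepB_up_pow: "(x,y) \<in> stepB \<gamma> B ^^ n \<Longrightarrow> ((fst x, snd x + d),(fst y, snd y + d)) \<in> stepB \<gamma> (B+d) ^^ n"
proof (induction n arbitrary: y)
  case 0 then show ?case by simp
next
  case (Suc n)
  then obtain z where "(x,z) \<in> stepB \<gamma> B ^^ n" "(z,y) \<in> stepB \<gamma> B" by auto
  then show ?case using Suc.IH stepB_up[of z y \<gamma> B d] by (metis relpow_Suc_I)
qed

lemma stepB_dn_pow: "(x,y) \<in> stepB \<gamma> B ^^ n \<Longrightarrow> d \<le> B \<Longrightarrow> ((fst x, snd x - d),(fst y, snd y - d)) \<in> stepB \<gamma> (B-d) ^^ n"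
proof (induction n arbitrary: y)
  case 0 then show ?case by simp
next
  case (Suc n)
  then obtain z where "(x,z) \<in> stepB \<gamma> B ^^ n" "(z,y) \<in> stepB \<gamma> B" by auto
  then show ?case using Suc stepB_dn[of z y \<gamma> B d] by (metis relpow_Suc_I)
qed

lemma step_up_pow: "((s,h),(s',h')) \<in> step \<gamma> ^^ n \<Longrightarrow> ((s,h+d),(s',h'+d)) \<in> step \<gamma> ^^ n"
proof -
  assume "((s,h),(s',h')) \<in> step \<gamma> ^^ n"
  then have "((s,h),(s',h')) \<in> stepB \<gamma> 0 ^^ n" by (simp add: stepB0)
  from stepB_up_pow[OF this, of d] have "((s,h+d),(s',h'+d)) \<in> stepB \<gamma> d ^^ n" by simp
  then show ?thesis using relpow_mono_set[OF stepB_sub] by blast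
qed

lemma step_up_star: "((s,h),(s',h')) \<in> (step \<gamma>)\<^sup>* \<Longrightarrow> ((s,h+d),(s',h'+d)) \<in> (step \<gamma>)\<^sup>*"
  using step_up_pow by (metis rtrancl_power)

lemma walk_seg: "\<forall>i<n. (f i, f (Suc i)) \<in> R \<Longrightarrow> i \<le> j \<Longrightarrow> j \<le> n \<Longrightarrow> (f i, f j) \<in> R ^^ (j - i)"
proof (induction j)
  case 0 then show ?case by simp
next
  case (Suc j)
  show ?case
  proof (cases "i = Suc j")
    case True then show ?thesis by simp
  next
    case False
    then have "(f i, f j) \<in> R ^^ (j - i)" using Suc by auto
    moreover have "(f j, f (Suc j)) \<in> R" using Suc by auto
    ultimately have "(f i, f (Suc j)) \<in> R ^^ Suc (j - i)" by auto
    moreover have "Suc (j - i) = Suc j - i" using False Suc.prems by auto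
    ultimately show ?thesis by simp
  qed
qed

lemma step_in_trans: "step \<gamma> \<subseteq> trans_rel \<gamma>"
proof
  fix z assume "z \<in> step \<gamma>"
  then obtain s h s' h' \<kappa> where z: "z = ((s,h),(s',h'))" and r: "(s,\<kappa>,s') \<in> \<gamma>" and e: "int h' = int h + \<kappa>"
    unfolding step_def by auto
  have "enabled (s,\<kappa>,s') (s,h)" unfolding enabled_def using e by auto
  moreover have "h' = nat (int h + \<kappa>)" using e by simp
  ultimately show "z \<in> trans_rel \<gamma>" unfolding trans_rel_def using z r by blast
qed

lemma trans_sub: assumes "pvass Q \<gamma> W" shows "trans_rel \<gamma> \<subseteq> step \<gamma> \<union> Id"
proof
  fix z assume z: "z \<in> trans_rel \<gamma>"
  show "z \<in> step \<gamma> \<union> Id"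
  proof (cases "z \<in> {(c, c) | c. \<not> (\<exists>r\<in>\<gamma>. enabled r c)}")
    case True then show ?thesis by auto
  next
    case False
    then obtain p k \<kappa> q where zz: "z = ((p, k), (q, nat (int k + \<kappa>)))" and r: "(p, \<kappa>, q) \<in> \<gamma>"
       and en: "enabled (p, \<kappa>, q) (p, k)" using z unfolding trans_rel_def by blast
    have "\<kappa> \<in> {-1,0,1}" using r assms unfolding pvass_def by auto
    then have "int (nat (int k + \<kappa>)) = int k + \<kappa>" using en unfolding enabled_def by auto
    then show ?thesis unfolding step_def using zz r by auto
  qed
qed

lemma star_eq: assumes "pvass Q \<gamma> W" shows "(trans_rel \<gamma>)\<^sup>* = (step \<gamma>)\<^sup>*"
proof -
  have "trans_rel \<gamma> \<subseteq> (step \<gamma>)\<^sup>*" using trans_sub[OF assms] by auto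
  then show ?thesis using rtrancl_subset[OF step_in_trans] by metis
qed

lemma pow_step_trans: "(x,y) \<in> step \<gamma> ^^ n \<Longrightarrow> (x,y) \<in> trans_rel \<gamma> ^^ n"
  using relpow_mono_set[OF step_in_trans] by blast

lemma step_props: assumes "pvass Q \<gamma> W" "(x,y) \<in> step \<gamma>"
  shows "\<bar>int (snd y) - int (snd x)\<bar> \<le> 1" "fst y \<in> Q" "fst x \<in> Q"
proof -
  obtain s h s' h' \<kappa> where z: "x = (s,h)" "y = (s',h')" and r: "(s,\<kappa>,s') \<in> \<gamma>" and e: "int h' = int h + \<kappa>"
    using assms(2) unfolding step_def by auto
  have "\<kappa> \<in> {-1,0,1}" "s \<in> Q" "s' \<in> Q" using r assms(1) unfolding pvass_def by auto
  then show "\<bar>int (snd y) - int (snd x)\<bar> \<le> 1" "fst y \<in> Q" "fst x \<in> Q" using z e by auto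
qed

lemma hit_up:
  fixes lv :: "nat \<Rightarrow> int"
  assumes st: "\<forall>t. a \<le> t \<longrightarrow> t < b \<longrightarrow> \<bar>lv (Suc t) - lv t\<bar> \<le> 1" and ab: "a \<le> b"
    and v: "lv a \<le> v" "v \<le> lv b"
  shows "\<exists>t. a \<le> t \<and> t \<le> b \<and> lv t = v \<and> (\<forall>s. a \<le> s \<longrightarrow> s < t \<longrightarrow> lv s < v)"
proof -
  define t where "t = (LEAST t. a \<le> t \<and> v \<le> lv t)"
  have ex: "a \<le> b \<and> v \<le> lv b" using ab v by auto
  have t1: "a \<le> t \<and> v \<le> lv t" unfolding t_def by (rule LeastI[of _ b], fact ex)
  have t2: "t \<le> b" unfolding t_def by (rule Least_le, fact ex)
  have t3: "\<forall>s. a \<le> s \<longrightarrow> s < t \<longrightarrow> lv s < v"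
  proof (intro allI impI)
    fix s assume s: "a \<le> s" "s < t"
    then have "\<not> (a \<le> s \<and> v \<le> lv s)" using not_less_Least unfolding t_def by blast
    then show "lv s < v" using s by simp
  qed
  have "lv t = v"
  proof (cases "t = a")
    case True then show ?thesis using t1 v by auto
  next
    case False
    then have "a < t" using t1 by simp
    then obtain s where s: "t = Suc s" by (cases t) auto
    then have as: "a \<le> s" using \<open>a < t\<close> by simp
    then have "lv s < v" using t3 s by simp
    moreover have "\<bar>lv (Suc s) - lv s\<bar> \<le> 1" using st s t2 as by simp
    ultimately show ?thesis using t1 s by simp
  qed
  then show ?thesis using t1 t2 t3 by blast
qed

lemma hit_down:
  fixes lv :: "nat \<Rightarrow> int"
  assumes st: "\<forall>t. a \<le> t \<longrightarrow> t < b \<longrightarrow> \<bar>lv (Suc t) - lv t\<bar> \<le> 1" and ab: "a \<le> b"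
    and v: "v \<le> lv a" "lv b \<le> v"
  shows "\<exists>t. a \<le> t \<and> t \<le> b \<and> lv t = v \<and> (\<forall>s. a \<le> s \<longrightarrow> s < t \<longrightarrow> v < lv s)"
proof -
  have st': "\<forall>t. a \<le> t \<longrightarrow> t < b \<longrightarrow> \<bar>(- lv (Suc t)) - (- lv t)\<bar> \<le> 1"
  proof (intro allI impI)
    fix t assume "a \<le> t" "t < b"
    then have "\<bar>lv (Suc t) - lv t\<bar> \<le> 1" using st by simp
    then show "\<bar>(- lv (Suc t)) - (- lv t)\<bar> \<le> 1" by linarith
  qed
  have "\<exists>t. a \<le> t \<and> t \<le> b \<and> - lv t = - v \<and> (\<forall>s. a \<le> s \<longrightarrow> s < t \<longrightarrow> - lv s < - v)"
    by (rule hit_up[where lv="\<lambda>t. - lv t", OF st' ab]) (use v in simp_all)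
  then show ?thesis by auto
qed

lemma cycle_up:
  fixes lv :: "nat \<Rightarrow> int" and st :: "nat \<Rightarrow> 'q"
  assumes stp: "\<forall>t. a \<le> t \<longrightarrow> t < b \<longrightarrow> \<bar>lv (Suc t) - lv t\<bar> \<le> 1" and ab: "a \<le> b"
    and lvl: "lv a + int n \<le> lv b"
    and Q: "\<forall>t. a \<le> t \<longrightarrow> t \<le> b \<longrightarrow> st t \<in> Q" "finite Q" "card Q \<le> n"
  shows "\<exists>i j. a \<le> i \<and> i < j \<and> j \<le> b \<and> st i = st j \<and> 0 < lv j - lv i \<and> lv j - lv i \<le> int n"
proof -
  have Tex: "\<forall>k\<in>{0..n}. \<exists>t. a \<le> t \<and> t \<le> b \<and> lv t = lv a + int k \<and> (\<forall>s. a \<le> s \<longrightarrow> s < t \<longrightarrow> lv s < lv a + int k)"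
  proof
    fix k assume "k \<in> {0..n}"
    then show "\<exists>t. a \<le> t \<and> t \<le> b \<and> lv t = lv a + int k \<and> (\<forall>s. a \<le> s \<longrightarrow> s < t \<longrightarrow> lv s < lv a + int k)"
      by (intro hit_up) (use stp ab lvl in auto)
  qed
  obtain T where T: "\<forall>k\<in>{0..n}. a \<le> T k \<and> T k \<le> b \<and> lv (T k) = lv a + int k \<and> (\<forall>s. a \<le> s \<longrightarrow> s < T k \<longrightarrow> lv s < lv a + int k)"
    using bchoice[OF Tex] by blast
  have "(st \<circ> T) ` {0..n} \<subseteq> Q" using T Q(1) by auto
  then have "card ((st \<circ> T) ` {0..n}) \<le> n" using Q(2,3) card_mono[of Q] by (meson le_trans)
  then have "\<not> inj_on (st \<circ> T) {0..n}" by (intro pigeonhole) auto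
  then obtain k1 k2 where k: "k1 \<in> {0..n}" "k2 \<in> {0..n}" "k1 \<noteq> k2" "st (T k1) = st (T k2)"
    unfolding inj_on_def by auto
  have main: "\<exists>i j. a \<le> i \<and> i < j \<and> j \<le> b \<and> st i = st j \<and> 0 < lv j - lv i \<and> lv j - lv i \<le> int n"
    if "x1 \<in> {0..n}" "x2 \<in> {0..n}" "x1 < x2" "st (T x1) = st (T x2)" for x1 x2
  proof -
    have a1: "a \<le> T x1 \<and> T x1 \<le> b \<and> lv (T x1) = lv a + int x1 \<and> (\<forall>s. a \<le> s \<longrightarrow> s < T x1 \<longrightarrow> lv s < lv a + int x1)"
      using T that by blast
    have a2: "a \<le> T x2 \<and> T x2 \<le> b \<and> lv (T x2) = lv a + int x2"
      using T that by blast
    have "T x1 < T x2"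
    proof (rule ccontr)
      assume "\<not> T x1 < T x2"
      moreover have "T x1 \<noteq> T x2" using a1 a2 that(3) by auto
      ultimately have "T x2 < T x1" by auto
      then have "lv (T x2) < lv a + int x1" using a1 a2 by auto
      then show False using a2 that(3) by auto
    qed
    moreover have "0 < lv (T x2) - lv (T x1)" "lv (T x2) - lv (T x1) \<le> int n" using a1 a2 that by auto
    ultimately show ?thesis using a1 a2 that(4) by blast
  qed
  show ?thesis
  proof (cases "k1 < k2")
    case True then show ?thesis using main k by blast
  next
    case False then have "k2 < k1" using k by auto
    then show ?thesis using main k by metis
  qed
qed

lemma cycle_down:
  fixes lv :: "nat \<Rightarrow> int" and st :: "nat \<Rightarrow> 'q"
  assumes stp: "\<forall>t. a \<le> t \<longrightarrow> t < b \<longrightarrow> \<bar>lv (Suc t) - lv t\<bar> \<le> 1" and ab: "a \<le> b"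
    and lvl: "lv b + int n \<le> lv a"
    and Q: "\<forall>t. a \<le> t \<longrightarrow> t \<le> b \<longrightarrow> st t \<in> Q" "finite Q" "card Q \<le> n"
  shows "\<exists>i j. a \<le> i \<and> i < j \<and> j \<le> b \<and> st i = st j \<and> lv j < lv i"
proof -
  have "\<exists>i j. a \<le> i \<and> i < j \<and> j \<le> b \<and> st i = st j \<and> 0 < (-lv j) - (-lv i) \<and> (-lv j) - (-lv i) \<le> int n"
    by (rule cycle_up[where Q=Q]) (use stp ab lvl Q in auto)
  then show ?thesis by auto
qed

definition sdisj :: "(nat \<times> nat) list \<Rightarrow> bool" where
  "sdisj cs = sorted_wrt (\<lambda>p q. snd p \<le> fst q) cs"

lemma multi_down:
  fixes lv :: "nat \<Rightarrow> int" and st :: "nat \<Rightarrow> 'q"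
  assumes stp: "\<forall>t. a \<le> t \<longrightarrow> t < b \<longrightarrow> \<bar>lv (Suc t) - lv t\<bar> \<le> 1" and ab: "a \<le> b"
    and lvl: "lv b + int (k * n) \<le> lv a"
    and Q: "\<forall>t. a \<le> t \<longrightarrow> t \<le> b \<longrightarrow> st t \<in> Q" "finite Q" "card Q \<le> n" and n: "1 \<le> n"
  shows "\<exists>cs. length cs = k \<and> sdisj cs \<and> (\<forall>(i,j)\<in>set cs. a \<le> i \<and> i < j \<and> j \<le> b \<and> st i = st j \<and> lv j < lv i)"
  using stp ab lvl Q(1)
proof (induction k arbitrary: a)
  case 0 then show ?case by (intro exI[of _ "[]"]) (auto simp: sdisj_def)
next
  case (Suc k)
  have e1: "int (Suc k * n) = int n + int k * int n" by simp
  have e2: "0 \<le> int (k * n)" by simp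
  have e3: "lv b + int (k * n) \<le> lv a - int n" using Suc.prems(3) e1 by simp
  have h1: "lv b \<le> lv a - int n" using e2 e3 by linarith
  have h2: "lv a - int n \<le> lv a" by simp
  have "\<exists>t. a \<le> t \<and> t \<le> b \<and> lv t = lv a - int n \<and> (\<forall>s. a \<le> s \<longrightarrow> s < t \<longrightarrow> lv a - int n < lv s)"
    by (rule hit_down[OF Suc.prems(1) Suc.prems(2) h2 h1])
  then obtain T where T: "a \<le> T" "T \<le> b" "lv T = lv a - int n" by auto
  have "\<exists>i j. a \<le> i \<and> i < j \<and> j \<le> T \<and> st i = st j \<and> lv j < lv i"
  proof -
    have st1: "\<forall>t. a \<le> t \<longrightarrow> t < T \<longrightarrow> \<bar>lv (Suc t) - lv t\<bar> \<le> 1" using Suc.prems(1) T(2) by simp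
    have q1: "\<forall>t. a \<le> t \<longrightarrow> t \<le> T \<longrightarrow> st t \<in> Q" using Suc.prems(4) T(2) by simp
    have l1: "lv T + int n \<le> lv a" using T(3) by simp
    show ?thesis by (rule cycle_down[OF st1 T(1) l1 q1 Q(2) Q(3)])
  qed
  then obtain i j where ij: "a \<le> i" "i < j" "j \<le> T" "st i = st j" "lv j < lv i" by auto
  have "\<exists>cs. length cs = k \<and> sdisj cs \<and> (\<forall>(i,j)\<in>set cs. T \<le> i \<and> i < j \<and> j \<le> b \<and> st i = st j \<and> lv j < lv i)"
  proof -
    have st1: "\<forall>t. T \<le> t \<longrightarrow> t < b \<longrightarrow> \<bar>lv (Suc t) - lv t\<bar> \<le> 1" using Suc.prems(1) T(1) by simp
    have q1: "\<forall>t. T \<le> t \<longrightarrow> t \<le> b \<longrightarrow> st t \<in> Q" using Suc.prems(4) T(1) by simp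
    have l1: "lv b + int (k * n) \<le> lv T" using T(3) e3 by simp
    show ?thesis by (rule Suc.IH[OF st1 T(2) l1 q1])
  qed
  then obtain cs where cs: "length cs = k" "sdisj cs" "\<forall>(i,j)\<in>set cs. T \<le> i \<and> i < j \<and> j \<le> b \<and> st i = st j \<and> lv j < lv i"
    by auto
  have s1: "sdisj ((i,j) # cs)"
  proof -
    have "\<forall>y\<in>set cs. j \<le> fst y" using cs(3) ij(3) by fastforce
    then show ?thesis using cs(2) unfolding sdisj_def by simp
  qed
  have s2: "\<forall>(i',j')\<in>set ((i,j) # cs). a \<le> i' \<and> i' < j' \<and> j' \<le> b \<and> st i' = st j' \<and> lv j' < lv i'"
    using cs(3) ij T by fastforce
  show ?case using s1 s2 cs(1) by (intro exI[of _ "(i,j) # cs"]) simp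
qed

lemma walk_seg2: "\<forall>t. a \<le> t \<longrightarrow> t < L \<longrightarrow> (f t, f (Suc t)) \<in> R \<Longrightarrow> a \<le> i \<Longrightarrow> i \<le> j \<Longrightarrow> j \<le> L \<Longrightarrow> (f i, f j) \<in> R ^^ (j - i)"
proof (induction j)
  case 0 then show ?case by simp
next
  case (Suc j)
  show ?case
  proof (cases "i = Suc j")
    case True then show ?thesis by simp
  next
    case False
    then have "(f i, f j) \<in> R ^^ (j - i)" using Suc by simp
    moreover have "(f j, f (Suc j)) \<in> R" using Suc False by simp
    ultimately have "(f i, f (Suc j)) \<in> R ^^ Suc (j - i)" by (rule relpow_Suc_I)
    moreover have "Suc (j - i) = Suc j - i" using False Suc.prems by simp
    ultimately show ?thesis by simp
  qed
qed

definition eff :: "(nat \<Rightarrow> 'q \<times> nat) \<Rightarrow> nat \<times> nat \<Rightarrow> int" where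
  "eff f c = int (snd (f (snd c))) - int (snd (f (fst c)))"

definition esum where "esum f cs = sum_list (map (eff f) cs)"
definition psum where "psum f cs = sum_list (map (\<lambda>c. max 0 (eff f c)) cs)"
definition lsum :: "(nat \<times> nat) list \<Rightarrow> nat" where "lsum cs = sum_list (map (\<lambda>c. snd c - fst c) cs)"

lemma psum_nonneg: "0 \<le> psum f cs"
  unfolding psum_def by (induction cs) auto

lemma remove_family:
  assumes walk: "\<forall>t. a \<le> t \<longrightarrow> t < L \<longrightarrow> (f t, f (Suc t)) \<in> step \<gamma>"
    and lev: "\<forall>t. a \<le> t \<longrightarrow> t \<le> L \<longrightarrow> B \<le> snd (f t)"
    and cs: "sdisj cs" "\<forall>c\<in>set cs. a \<le> fst c \<and> fst c < snd c \<and> snd c \<le> L \<and> fst (f (fst c)) = fst (f (snd c))"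
    and P: "psum f cs \<le> int B" and aL: "a \<le> L"
  shows "\<exists>L'. L' + lsum cs = L - a \<and> int B - psum f cs \<le> int (snd (f L)) - esum f cs \<and>
        (f a, (fst (f L), nat (int (snd (f L)) - esum f cs))) \<in> stepB \<gamma> (B - nat (psum f cs)) ^^ L'"
  using walk lev cs P aL
proof (induction cs arbitrary: a)
  case Nil
  have w: "\<forall>t. a \<le> t \<longrightarrow> t < L \<longrightarrow> (f t, f (Suc t)) \<in> stepB \<gamma> B"
  proof (intro allI impI)
    fix t assume "a \<le> t" "t < L"
    then show "(f t, f (Suc t)) \<in> stepB \<gamma> B" using Nil.prems(1,2) unfolding stepB_def by simp
  qed
  have "(f a, f L) \<in> stepB \<gamma> B ^^ (L - a)" using walk_seg2[OF w] Nil.prems(6) by simp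
  moreover have "(fst (f L), nat (int (snd (f L)) - esum f [])) = f L" by (simp add: esum_def)
  moreover have "int B - psum f [] \<le> int (snd (f L)) - esum f []"
    using Nil.prems(2,6) by (simp add: esum_def psum_def)
  ultimately show ?case by (auto simp: psum_def lsum_def)
next
  case (Cons c cs')
  obtain i j where c: "c = (i,j)" by (cases c)
  have ij: "a \<le> i" "i < j" "j \<le> L" "fst (f i) = fst (f j)" using Cons.prems(4) c by auto
  have sd: "sdisj cs'" "\<forall>y\<in>set cs'. j \<le> fst y" using Cons.prems(3) c unfolding sdisj_def by auto
  define e1 where "e1 = eff f c"
  have e1v: "e1 = int (snd (f j)) - int (snd (f i))" unfolding e1_def eff_def c by simp
  have Pc: "psum f (c # cs') = max 0 e1 + psum f cs'" unfolding psum_def e1_def by simp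
  have Ec: "esum f (c # cs') = e1 + esum f cs'" unfolding esum_def e1_def by simp
  have Lc: "lsum (c # cs') = (j - i) + lsum cs'" unfolding lsum_def c by simp
  have P'0: "0 \<le> psum f cs'" by (rule psum_nonneg)
  have P': "psum f cs' \<le> int B" using Cons.prems(5) Pc by linarith
  have w': "\<forall>t. j \<le> t \<longrightarrow> t < L \<longrightarrow> (f t, f (Suc t)) \<in> step \<gamma>" using Cons.prems(1) ij by simp
  have l': "\<forall>t. j \<le> t \<longrightarrow> t \<le> L \<longrightarrow> B \<le> snd (f t)" using Cons.prems(2) ij by simp
  have c': "\<forall>c\<in>set cs'. j \<le> fst c \<and> fst c < snd c \<and> snd c \<le> L \<and> fst (f (fst c)) = fst (f (snd c))"
    using Cons.prems(4) sd(2) by simp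
  obtain L1 where L1: "L1 + lsum cs' = L - j" "int B - psum f cs' \<le> int (snd (f L)) - esum f cs'"
    "(f j, (fst (f L), nat (int (snd (f L)) - esum f cs'))) \<in> stepB \<gamma> (B - nat (psum f cs')) ^^ L1"
    using Cons.IH[OF w' l' sd(1) c' P' ij(3)] by blast
  define X where "X = int (snd (f L)) - esum f cs'"
  define u where "u = fst (f i)"
  have fiq: "(u, snd (f i)) = f i" unfolding u_def by simp
  have X0: "int B - psum f cs' \<le> X" using L1(2) unfolding X_def by simp
  have mid: "(f i, (fst (f L), nat (X - e1))) \<in> stepB \<gamma> (B - nat (psum f (c # cs'))) ^^ L1"
  proof (cases "e1 \<le> 0")
    case True
    define d where "d = snd (f i) - snd (f j)"
    have dd: "snd (f j) + d = snd (f i)" "int d = - e1" using True e1v unfolding d_def by auto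
    have F: "((fst (f j), snd (f j) + d), (fst (f L), nat X + d)) \<in> stepB \<gamma> (B - nat (psum f cs') + d) ^^ L1"
      using stepB_up_pow[OF L1(3)[folded X_def], of d] by simp
    have nx: "nat X + d = nat (X - e1)" using dd X0 P' by linarith
    have BB: "B - nat (psum f (c # cs')) \<le> B - nat (psum f cs') + d"
    proof -
      have "max 0 e1 = 0" using True by (simp add: max_def)
      then have "psum f (c # cs') = psum f cs'" using Pc by simp
      then show ?thesis by simp
    qed
    have m: "stepB \<gamma> (B - nat (psum f cs') + d) ^^ L1 \<subseteq> stepB \<gamma> (B - nat (psum f (c # cs'))) ^^ L1"
      by (rule relpow_mono_set[OF stepB_mono[OF BB]])
    have fj: "fst (f j) = u" using ij(4) unfolding u_def by simp
    have "((fst (f j), snd (f j) + d), (fst (f L), nat X + d)) \<in> stepB \<gamma> (B - nat (psum f (c # cs'))) ^^ L1"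
      using m F by blast
    then have "((u, snd (f i)), (fst (f L), nat (X - e1))) \<in> stepB \<gamma> (B - nat (psum f (c # cs'))) ^^ L1"
      unfolding fj dd(1) nx .
    then show ?thesis by (simp only: fiq)
  next
    case False
    define d where "d = snd (f j) - snd (f i)"
    have dd: "snd (f j) - d = snd (f i)" "int d = e1" using False e1v unfolding d_def by auto
    have dB: "d \<le> B - nat (psum f cs')" using Cons.prems(5) Pc dd False P'0 by linarith
    have "((fst (f j), snd (f j) - d), (fst (f L), nat X - d)) \<in> stepB \<gamma> (B - nat (psum f cs') - d) ^^ L1"
      using stepB_dn_pow[OF L1(3)[folded X_def] dB] by simp
    moreover have "nat X - d = nat (X - e1)" using dd X0 Cons.prems(5) Pc False by linarith
    moreover have "B - nat (psum f cs') - d = B - nat (psum f (c # cs'))" using Pc dd False P'0 by linarith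
    ultimately have "((fst (f j), snd (f j) - d), (fst (f L), nat (X - e1))) \<in> stepB \<gamma> (B - nat (psum f (c # cs'))) ^^ L1"
      by simp
    moreover have fj: "fst (f j) = u" using ij(4) unfolding u_def by simp
    ultimately have "((u, snd (f i)), (fst (f L), nat (X - e1))) \<in> stepB \<gamma> (B - nat (psum f (c # cs'))) ^^ L1"
      unfolding dd(1) by simp
    then show ?thesis by (simp only: fiq)
  qed
  have wB: "\<forall>t. a \<le> t \<longrightarrow> t < L \<longrightarrow> (f t, f (Suc t)) \<in> stepB \<gamma> (B - nat (psum f (c # cs')))"
  proof (intro allI impI)
    fix t assume "a \<le> t" "t < L"
    then have "B \<le> snd (f t)" "B \<le> snd (f (Suc t))" "(f t, f (Suc t)) \<in> step \<gamma>" using Cons.prems(1,2) by simp_all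
    then show "(f t, f (Suc t)) \<in> stepB \<gamma> (B - nat (psum f (c # cs')))"
      unfolding stepB_def by (simp add: le_trans[OF diff_le_self])
  qed
  have iL: "i \<le> L" using ij(2,3) by simp
  have pre: "(f a, f i) \<in> stepB \<gamma> (B - nat (psum f (c # cs'))) ^^ (i - a)"
    by (rule walk_seg2[OF wB order_refl ij(1) iL])
  have all: "(f a, (fst (f L), nat (X - e1))) \<in> stepB \<gamma> (B - nat (psum f (c # cs'))) ^^ ((i - a) + L1)"
    using relpow_trans[OF pre mid] .
  have "X - e1 = int (snd (f L)) - esum f (c # cs')" unfolding X_def Ec by simp
  moreover have "int B - psum f (c # cs') \<le> X - e1" using X0 Pc by linarith
  moreover have "(i - a) + L1 + lsum (c # cs') = L - a" using Lc L1(1) ij by simp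
  ultimately show ?case using all by metis
qed

lemma sum_split_dt: "a \<le> b \<Longrightarrow> sum_list (take b xs) = sum_list (take a xs) + sum_list (drop a (take b (xs::'a::monoid_add list)))"
proof -
  assume ab: "a \<le> b"
  have "take b xs = take a (take b xs) @ drop a (take b xs)" by (rule append_take_drop_id[symmetric])
  moreover have "take a (take b xs) = take a xs" using ab by (simp add: min_def)
  ultimately have "take b xs = take a xs @ drop a (take b xs)" by simp
  then show ?thesis by (metis sum_list_append)
qed

lemma block_sel:
  fixes xs :: "int list" and g :: nat
  assumes len: "length xs = g" and g0: "0 < g"
  shows "\<exists>a b. a < b \<and> b \<le> g \<and> int g dvd sum_list (drop a (take b xs))"
proof -
  define h where "h k = sum_list (take k xs) mod int g" for k
  have "h ` {0..g} \<subseteq> {0..<int g}" unfolding h_def using g0 by auto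
  then have "card (h ` {0..g}) \<le> card {0..<int g}" by (intro card_mono) simp_all
  then have "card (h ` {0..g}) \<le> g" by simp
  then have "\<not> inj_on h {0..g}" by (intro pigeonhole) simp
  then obtain k1 k2 where k: "k1 \<in> {0..g}" "k2 \<in> {0..g}" "k1 \<noteq> k2" "h k1 = h k2"
    unfolding inj_on_def by blast
  have main: "\<exists>a b. a < b \<and> b \<le> g \<and> int g dvd sum_list (drop a (take b xs))"
    if "x1 < x2" "x2 \<le> g" "h x1 = h x2" for x1 x2
  proof -
    have "int g dvd sum_list (take x2 xs) - sum_list (take x1 xs)"
      using that(3) unfolding h_def by (metis mod_eq_dvd_iff)
    moreover have "sum_list (take x2 xs) = sum_list (take x1 xs) + sum_list (drop x1 (take x2 xs))"
      by (rule sum_split_dt) (use that(1) in simp)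
    ultimately have "int g dvd sum_list (drop x1 (take x2 xs))" by simp
    then show ?thesis using that(1,2) by blast
  qed
  show ?thesis
  proof (cases "k1 < k2")
    case True then show ?thesis using main k by simp
  next
    case False then have "k2 < k1" using k(3) by simp
    then show ?thesis using main[of k2 k1] k by simp
  qed
qed

lemma psum_dt_le: "psum f (drop a (take b cs)) \<le> psum f cs"
proof -
  have nn: "\<And>ys. 0 \<le> psum f ys" by (rule psum_nonneg)
  have "psum f cs = psum f (take b cs) + psum f (drop b cs)"
    unfolding psum_def by (metis append_take_drop_id map_append sum_list_append)
  moreover have "psum f (take b cs) = psum f (take a (take b cs)) + psum f (drop a (take b cs))"
    unfolding psum_def by (metis append_take_drop_id map_append sum_list_append)
  ultimately show ?thesis using nn[of "drop b cs"] nn[of "take a (take b cs)"] by linarith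
qed

lemma no_family:
  fixes f :: "nat \<Rightarrow> 'q \<times> nat" and g :: nat
  assumes walk: "\<forall>t<L. (f t, f (Suc t)) \<in> step \<gamma>"
    and fL: "fst (f L) = p" "g dvd snd (f L)"
    and minimal: "\<forall>L' m. (f 0, (p, m)) \<in> step \<gamma> ^^ L' \<longrightarrow> g dvd m \<longrightarrow> L \<le> L'"
    and g0: "0 < g" and aL: "a \<le> L"
    and lev: "\<forall>t. a \<le> t \<longrightarrow> t \<le> L \<longrightarrow> B \<le> snd (f t)"
    and cs: "sdisj cs" "\<forall>c\<in>set cs. a \<le> fst c \<and> fst c < snd c \<and> snd c \<le> L \<and> fst (f (fst c)) = fst (f (snd c))"
      "length cs = g" "psum f cs \<le> int B"
  shows False
proof -
  obtain a0 b0 where ab: "a0 < b0" "b0 \<le> g" "int g dvd sum_list (drop a0 (take b0 (map (eff f) cs)))"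
    using block_sel[of "map (eff f) cs" g] cs(3) g0 by auto
  define cs0 where "cs0 = drop a0 (take b0 cs)"
  have E0: "int g dvd esum f cs0" using ab(3) unfolding esum_def cs0_def by (simp add: drop_map take_map)
  have sd0: "sdisj cs0" using cs(1) unfolding sdisj_def cs0_def by (simp add: sorted_wrt_take sorted_wrt_drop)
  have sub: "set cs0 \<subseteq> set cs" unfolding cs0_def by (meson in_set_dropD in_set_takeD subsetI)
  have c0: "\<forall>c\<in>set cs0. a \<le> fst c \<and> fst c < snd c \<and> snd c \<le> L \<and> fst (f (fst c)) = fst (f (snd c))"
    using cs(2) sub by blast
  have P0: "psum f cs0 \<le> int B" using psum_dt_le[of f a0 b0 cs] cs(4) unfolding cs0_def by linarith
  have ne: "cs0 \<noteq> []" unfolding cs0_def using ab cs(3) by simp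
  then obtain c cs1 where cc: "cs0 = c # cs1" by (cases cs0) auto
  have "0 < snd c - fst c" using c0 cc by simp
  then have lpos: "0 < lsum cs0" unfolding lsum_def cc by simp
  have walkA: "\<forall>t. a \<le> t \<longrightarrow> t < L \<longrightarrow> (f t, f (Suc t)) \<in> step \<gamma>" using walk by simp
  obtain L' where L': "L' + lsum cs0 = L - a" "int B - psum f cs0 \<le> int (snd (f L)) - esum f cs0"
      "(f a, (fst (f L), nat (int (snd (f L)) - esum f cs0))) \<in> stepB \<gamma> (B - nat (psum f cs0)) ^^ L'"
    using remove_family[OF walkA lev sd0 c0 P0 aL] by blast
  define X where "X = int (snd (f L)) - esum f cs0"
  have X0: "0 \<le> X" using L'(2) P0 unfolding X_def by linarith
  have "int g dvd int (snd (f L))" using fL(2) by (simp only: int_dvd_int_iff)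
  then have "int g dvd X" unfolding X_def using E0 by (rule dvd_diff)
  then have "int g dvd int (nat X)" using X0 by simp
  then have gX: "g dvd nat X" by (simp only: int_dvd_int_iff)
  have w2: "(f a, (p, nat X)) \<in> step \<gamma> ^^ L'"
    using relpow_mono_set[OF stepB_sub] L'(3) fL(1) unfolding X_def by blast
  have w1: "(f 0, f a) \<in> step \<gamma> ^^ (a - 0)" by (rule walk_seg[OF walk _ aL]) simp
  have "(f 0, (p, nat X)) \<in> step \<gamma> ^^ (a + L')" using relpow_trans[OF w1 w2] by simp
  then have "L \<le> a + L'" using minimal gX by blast
  then show False using L'(1) lpos aL by linarith
qed

lemma window_cycle:
  fixes st :: "nat \<Rightarrow> 'q"
  assumes Q: "\<forall>s. t \<le> s \<longrightarrow> s \<le> t + n \<longrightarrow> st s \<in> Q" "finite Q" "card Q \<le> n"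
  shows "\<exists>i j. t \<le> i \<and> i < j \<and> j \<le> t + n \<and> st i = st j"
proof -
  have "st ` {t..t+n} \<subseteq> Q" using Q(1) by auto
  then have "card (st ` {t..t+n}) \<le> n" using Q(2,3) card_mono[of Q] by (meson le_trans)
  then have "\<not> inj_on st {t..t+n}" by (intro pigeonhole) simp
  then obtain i j where ij: "i \<in> {t..t+n}" "j \<in> {t..t+n}" "i \<noteq> j" "st i = st j"
    unfolding inj_on_def by blast
  show ?thesis
  proof (cases "i < j")
    case True then show ?thesis using ij by auto
  next
    case False then have "j < i" using ij(3) by simp
    then show ?thesis using ij by (intro exI[of _ j] exI[of _ i]) auto
  qed
qed

lemma lev_diff:
  fixes lv :: "nat \<Rightarrow> int"
  assumes "\<forall>t. i \<le> t \<longrightarrow> t < j \<longrightarrow> \<bar>lv (Suc t) - lv t\<bar> \<le> 1" "i \<le> j"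
  shows "\<bar>lv j - lv i\<bar> \<le> int (j - i)"
  using assms
proof (induction j)
  case 0 then show ?case by simp
next
  case (Suc j)
  show ?case
  proof (cases "i = Suc j")
    case True then show ?thesis by simp
  next
    case False
    then have ij: "i \<le> j" using Suc.prems(2) by simp
    then have "\<bar>lv j - lv i\<bar> \<le> int (j - i)" using Suc.IH Suc.prems(1) by simp
    moreover have "\<bar>lv (Suc j) - lv j\<bar> \<le> 1" using Suc.prems(1) ij by simp
    moreover have "int (Suc j - i) = int (j - i) + 1" using ij by simp
    ultimately show ?thesis by linarith
  qed
qed

lemma psum_zero: "\<forall>c\<in>set cs. eff f c \<le> 0 \<Longrightarrow> psum f cs = 0"
  unfolding psum_def by (induction cs) auto

lemma psum_bound: "\<forall>c\<in>set cs. eff f c \<le> int n \<Longrightarrow> psum f cs \<le> int (length cs * n)"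
  unfolding psum_def by (induction cs) auto

locale mwalk =
  fixes \<gamma> :: "('q \<times> int \<times> 'q) set" and Q :: "'q set" and f :: "nat \<Rightarrow> 'q \<times> nat"
    and L :: nat and p :: 'q and g :: nat and n :: nat
  assumes walk: "\<forall>t<L. (f t, f (Suc t)) \<in> step \<gamma>"
  and fL: "fst (f L) = p" "g dvd snd (f L)"
  and minimal: "\<forall>L' m. (f 0, (p, m)) \<in> step \<gamma> ^^ L' \<longrightarrow> g dvd m \<longrightarrow> L \<le> L'"
  and g0: "0 < g" and gn: "g \<le> n"
  and Qs: "\<forall>t\<le>L. fst (f t) \<in> Q" and finQ: "finite Q" and cardQ: "card Q \<le> n"
  and sb: "\<forall>t<L. \<bar>int (snd (f (Suc t))) - int (snd (f t))\<bar> \<le> 1"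
begin

lemma tail_bound:
  assumes hi: "\<forall>t. a \<le> t \<longrightarrow> t \<le> L \<longrightarrow> n * n \<le> snd (f t)"
  shows "L + 1 < a + (2 * g - 1) * (n + 1)"
proof (rule ccontr)
  assume "\<not> L + 1 < a + (2 * g - 1) * (n + 1)"
  define K where "K = 2 * g - 1"
  have big: "a + K * (n + 1) \<le> L + 1" using \<open>\<not> L + 1 < a + (2 * g - 1) * (n + 1)\<close> unfolding K_def by simp
  have K0: "0 < K" using g0 unfolding K_def by simp
  have "1 * (n + 1) \<le> K * (n + 1)" using K0 by (intro mult_le_mono1) simp
  then have aL: "a \<le> L" using big by simp
  have win: "\<forall>w<K. \<exists>i j. a + w * (n + 1) \<le> i \<and> i < j \<and> j \<le> a + w * (n + 1) + n \<and> fst (f i) = fst (f j)"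
  proof (intro allI impI)
    fix w assume w: "w < K"
    have "(w + 1) * (n + 1) \<le> K * (n + 1)" using w by (intro mult_le_mono1) simp
    then have e: "a + w * (n + 1) + n \<le> L" using big by simp
    show "\<exists>i j. a + w * (n + 1) \<le> i \<and> i < j \<and> j \<le> a + w * (n + 1) + n \<and> fst (f i) = fst (f j)"
    proof (rule window_cycle[where Q=Q])
      show "\<forall>s. a + w * (n + 1) \<le> s \<longrightarrow> s \<le> a + w * (n + 1) + n \<longrightarrow> fst (f s) \<in> Q"
        using Qs e by simp
    qed (use finQ cardQ in simp_all)
  qed
  then obtain I J where IJ: "\<forall>w<K. a + w * (n + 1) \<le> I w \<and> I w < J w \<and> J w \<le> a + w * (n + 1) + n \<and> fst (f (I w)) = fst (f (J w))"
    by metis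
  define cs where "cs = map (\<lambda>w. (I w, J w)) [0..<K]"
  have lencs: "length cs = K" unfolding cs_def by simp
  have sdcs: "sdisj cs"
  proof -
    have "sorted_wrt (\<lambda>w w'. J w \<le> I w') [0..<K]"
    proof (rule sorted_wrt_mono_rel[OF _ sorted_wrt_upt])
      fix w w' assume ww: "w \<in> set [0..<K]" "w' \<in> set [0..<K]" "w < w'"
      have "(w + 1) * (n + 1) \<le> w' * (n + 1)" using ww(3) by (intro mult_le_mono1) simp
      then have "a + w * (n + 1) + n < a + w' * (n + 1)" by simp
      moreover have "w < K" "w' < K" using ww by auto
      ultimately have "J w \<le> a + w * (n + 1) + n" "a + w' * (n + 1) \<le> I w'" using IJ by blast+
      then show "J w \<le> I w'" using \<open>a + w * (n + 1) + n < a + w' * (n + 1)\<close> by linarith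
    qed
    then show ?thesis unfolding sdisj_def cs_def by (simp add: sorted_wrt_map)
  qed
  have cyc: "\<forall>c\<in>set cs. a \<le> fst c \<and> fst c < snd c \<and> snd c \<le> L \<and> fst (f (fst c)) = fst (f (snd c))"
  proof
    fix c assume "c \<in> set cs"
    then obtain w where w: "w < K" "c = (I w, J w)" unfolding cs_def by auto
    have "(w + 1) * (n + 1) \<le> K * (n + 1)" using w by (intro mult_le_mono1) simp
    then have e: "a + w * (n + 1) + n \<le> L" using big by simp
    then show "a \<le> fst c \<and> fst c < snd c \<and> snd c \<le> L \<and> fst (f (fst c)) = fst (f (snd c))"
      using IJ w by force
  qed
  have effb: "\<forall>c\<in>set cs. eff f c \<le> int n"
  proof
    fix c assume c: "c \<in> set cs"
    then have c1: "fst c < snd c" "snd c \<le> L" using cyc by auto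
    obtain w where w: "w < K" "c = (I w, J w)" using c unfolding cs_def by auto
    have c2: "snd c - fst c \<le> n" using IJ w by force
    have "\<bar>int (snd (f (snd c))) - int (snd (f (fst c)))\<bar> \<le> int (snd c - fst c)"
      by (rule lev_diff[where lv="\<lambda>t. int (snd (f t))"]) (use sb c1 in simp_all)
    then show "eff f c \<le> int n" unfolding eff_def using c2 by linarith
  qed
  define neg where "neg = filter (\<lambda>c. eff f c \<le> 0) cs"
  define pos where "pos = filter (\<lambda>c. \<not> eff f c \<le> 0) cs"
  have "length neg + length pos = K" unfolding neg_def pos_def using sum_length_filter_compl lencs by metis
  then have "g \<le> length neg \<or> g \<le> length pos" unfolding K_def using g0 by linarith
  then show False
  proof
    assume gl: "g \<le> length neg"
    define cs' where "cs' = take g neg"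
    have sub: "set cs' \<subseteq> set cs" unfolding cs'_def neg_def by (meson filter_is_subset in_set_takeD subset_iff)
    have "psum f cs' = 0"
      by (rule psum_zero) (auto simp: cs'_def neg_def dest: in_set_takeD)
    then have P: "psum f cs' \<le> int 0" by simp
    have sd: "sdisj cs'" using sdcs unfolding sdisj_def cs'_def neg_def by (simp add: sorted_wrt_take sorted_wrt_filter)
    have lev0: "\<forall>t. a \<le> t \<longrightarrow> t \<le> L \<longrightarrow> 0 \<le> snd (f t)" by simp
    show False
      by (rule no_family[OF walk fL minimal g0 aL lev0 sd _ _ P]) (use cyc sub gl in \<open>auto simp: cs'_def\<close>)
  next
    assume gl: "g \<le> length pos"
    define cs' where "cs' = take g pos"
    have sub: "set cs' \<subseteq> set cs" unfolding cs'_def pos_def by (meson filter_is_subset in_set_takeD subset_iff)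
    have lcs': "length cs' = g" unfolding cs'_def using gl by simp
    have "psum f cs' \<le> int (length cs' * n)"
      by (rule psum_bound) (use effb sub in blast)
    moreover have "length cs' * n \<le> n * n" using lcs' gn by simp
    ultimately have P: "psum f cs' \<le> int (n * n)" by linarith
    have sd: "sdisj cs'" using sdcs unfolding sdisj_def cs'_def pos_def by (simp add: sorted_wrt_take sorted_wrt_filter)
    show False
      by (rule no_family[OF walk fL minimal g0 aL hi sd _ lcs' P]) (use cyc sub in blast)
  qed
qed

end

lemma arith1: "1 \<le> (n::nat) \<Longrightarrow> 2 * n * n + n \<le> 2 * n * n * n + 2"
proof (cases "n = 1")
  case True then show ?thesis by simp
next
  case False
  assume "1 \<le> n"
  then have n2: "2 \<le> n" using False by simp
  then have "2 * n * n * 2 \<le> 2 * n * n * n" by (intro mult_le_mono2)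
  moreover have "n \<le> 2 * n * n" using n2 by (simp add: mult_le_mono)
  ultimately show ?thesis by linarith
qed

context mwalk begin

lemma f_inj: "inj_on f {0..L}"
proof (rule inj_onI)
  have main: "False" if ij: "i < j" "j \<le> L" "f i = f j" for i j
  proof -
    have w1: "(f 0, f i) \<in> step \<gamma> ^^ (i - 0)" by (rule walk_seg[OF walk]) (use ij in simp_all)
    have w2: "(f j, f L) \<in> step \<gamma> ^^ (L - j)" by (rule walk_seg[OF walk]) (use ij in simp_all)
    have fe: "f L = (p, snd (f L))" using fL(1) by (simp add: prod_eq_iff)
    have "(f 0, f L) \<in> step \<gamma> ^^ (i + (L - j))" using relpow_trans[OF w1 w2[folded ij(3)]] by simp
    then have "(f 0, (p, snd (f L))) \<in> step \<gamma> ^^ (i + (L - j))" by (subst fe[symmetric])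
    then have "L \<le> i + (L - j)" using minimal fL(2) by blast
    then show False using ij by linarith
  qed
  fix x y assume "x \<in> {0..L}" "y \<in> {0..L}" "f x = f y"
  then show "x = y" using main[of x y] main[of y x] by (metis atLeastAtMost_iff linorder_neqE_nat)
qed

lemma levs: "\<forall>t. a \<le> t \<longrightarrow> t < b \<longrightarrow> \<bar>(\<lambda>t. int (snd (f t))) (Suc t) - (\<lambda>t. int (snd (f t))) t\<bar> \<le> 1" if "b \<le> L" for a b
  using sb that by simp

lemma head_bound:
  assumes tL: "\<tau> \<le> L" and low: "snd (f \<tau>) < n * n"
  shows "\<forall>t\<le>\<tau>. snd (f t) < n * n + g * n"
proof (rule ccontr)
  assume "\<not> (\<forall>t\<le>\<tau>. snd (f t) < n * n + g * n)"
  then obtain t where t: "t \<le> \<tau>" "n * n + g * n \<le> snd (f t)" by (auto simp: not_less)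
  have n1: "1 \<le> n" using g0 gn by simp
  have lv: "int (snd (f \<tau>)) + int (g * n) \<le> int (snd (f t))" using t low by linarith
  have Q1: "\<forall>s. t \<le> s \<longrightarrow> s \<le> \<tau> \<longrightarrow> fst (f s) \<in> Q" using Qs tL by simp
  obtain cs where cs: "length cs = g" "sdisj cs"
      "\<forall>(i,j)\<in>set cs. t \<le> i \<and> i < j \<and> j \<le> \<tau> \<and> fst (f i) = fst (f j) \<and> int (snd (f j)) < int (snd (f i))"
    using multi_down[where lv="\<lambda>t. int (snd (f t))" and st="\<lambda>t. fst (f t)", OF levs[OF tL] t(1) lv Q1 finQ cardQ n1]
    by blast
  have cyc: "\<forall>c\<in>set cs. 0 \<le> fst c \<and> fst c < snd c \<and> snd c \<le> L \<and> fst (f (fst c)) = fst (f (snd c))"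
    using cs(3) tL by fastforce
  have "psum f cs = 0" by (rule psum_zero) (use cs(3) in \<open>fastforce simp: eff_def\<close>)
  then have P: "psum f cs \<le> int 0" by simp
  have lev0: "\<forall>t. 0 \<le> t \<longrightarrow> t \<le> L \<longrightarrow> 0 \<le> snd (f t)" by simp
  show False by (rule no_family[OF walk fL minimal g0 _ lev0 cs(2) cyc cs(1) P]) simp
qed

lemma count_bound:
  assumes tL: "\<tau> \<le> L" and lo: "\<forall>t\<le>\<tau>. snd (f t) < M"
  shows "\<tau> + 1 \<le> n * M"
proof -
  have "{0..\<tau>} \<subseteq> {0..L}" using tL by auto
  then have "inj_on f {0..\<tau>}" using f_inj inj_on_subset by blast
  then have "card (f ` {0..\<tau>}) = \<tau> + 1" by (simp add: card_image)
  moreover have "f ` {0..\<tau>} \<subseteq> Q \<times> {..<M}"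
  proof
    fix x assume "x \<in> f ` {0..\<tau>}"
    then obtain t where t: "t \<le> \<tau>" "x = f t" by auto
    then have "fst x \<in> Q" "snd x < M" using Qs lo tL by auto
    then show "x \<in> Q \<times> {..<M}" by (cases x) auto
  qed
  then have "card (f ` {0..\<tau>}) \<le> card (Q \<times> {..<M})" using finQ by (intro card_mono) auto
  moreover have "card (Q \<times> {..<M}) = card Q * M" by (simp add: card_cartesian_product)
  moreover have "card Q * M \<le> n * M" using cardQ by simp
  ultimately show ?thesis by linarith
qed

lemma L_bound: "L \<le> 4 * n ^ 3"
proof -
  have n1: "1 \<le> n" using g0 gn by simp
  have X: "(2 * g - 1) * (n + 1) + (n + 1) \<le> 2 * n * (n + 1)"
  proof -
    obtain k where k: "2 * g = Suc k" using g0 by (metis gr0_conv_Suc mult_2 add_Suc)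
    have "(2 * g - 1) * (n + 1) + (n + 1) = 2 * g * (n + 1)" unfolding k by simp
    also have "\<dots> \<le> 2 * n * (n + 1)" using gn by (intro mult_le_mono1) simp
    finally show ?thesis .
  qed
  have A: "2 * n * n + n \<le> 2 * n * n * n + 2" by (rule arith1[OF n1])
  have p3: "n ^ 3 = n * n * n" by (simp add: power3_eq_cube)
  show ?thesis
  proof (cases "\<exists>t\<le>L. snd (f t) < n * n")
    case True
    define S where "S = {t. t \<le> L \<and> snd (f t) < n * n}"
    have fS: "finite S" unfolding S_def by simp
    have neS: "S \<noteq> {}" using True unfolding S_def by auto
    define \<tau> where "\<tau> = Max S"
    have tS: "\<tau> \<in> S" unfolding \<tau>_def using fS neS by (rule Max_in)
    then have tL: "\<tau> \<le> L" and low: "snd (f \<tau>) < n * n" unfolding S_def by auto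
    have hi: "\<forall>t. \<tau> + 1 \<le> t \<longrightarrow> t \<le> L \<longrightarrow> n * n \<le> snd (f t)"
    proof (intro allI impI)
      fix t assume t: "\<tau> + 1 \<le> t" "t \<le> L"
      show "n * n \<le> snd (f t)"
      proof (rule ccontr)
        assume "\<not> n * n \<le> snd (f t)"
        then have "t \<in> S" using t unfolding S_def by simp
        then have "t \<le> \<tau>" unfolding \<tau>_def using fS by simp
        then show False using t by simp
      qed
    qed
    have T: "L + 1 < \<tau> + 1 + (2 * g - 1) * (n + 1)" by (rule tail_bound[OF hi])
    have Hd: "\<tau> + 1 \<le> n * (n * n + g * n)" by (rule count_bound[OF tL head_bound[OF tL low]])
    have "n * (n * n + g * n) \<le> n * (n * n + n * n)" using gn by (simp add: mult_le_mono)
    moreover have "n * (n * n + n * n) = 2 * n * n * n" by (simp add: algebra_simps)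
    ultimately have Hd2: "\<tau> + 1 \<le> 2 * n * n * n" using Hd by linarith
    have "L + 1 + (n + 1) < 2 * n * n * n + 2 * n * (n + 1)" using T Hd2 X by linarith
    then have "L \<le> 2 * n * n * n + 2 * n * n + n - 2" by (simp add: algebra_simps)
    then have "L \<le> 4 * (n * n * n)" using A by linarith
    then show ?thesis using p3 by simp
  next
    case False
    then have hi: "\<forall>t. 0 \<le> t \<longrightarrow> t \<le> L \<longrightarrow> n * n \<le> snd (f t)" by (auto simp: not_less)
    have T: "L + 1 < 0 + (2 * g - 1) * (n + 1)" by (rule tail_bound[OF hi])
    have "L + 1 + (n + 1) < 2 * n * (n + 1)" using T X by linarith
    moreover have "2 * n * (n + 1) = 2 * n * n + 2 * n" by (simp add: algebra_simps)
    ultimately have "L \<le> 4 * (n * n * n)" using A by linarith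
    then show ?thesis using p3 by simp
  qed
qed

end

lemma walk_Q:
  assumes pv: "pvass Q \<gamma> W" and walk: "\<forall>t<L. (f t, f (Suc t)) \<in> step \<gamma>" and f0: "fst (f 0) \<in> Q"
  shows "\<forall>t\<le>L. fst (f t) \<in> Q"
proof (intro allI impI)
  fix t assume t: "t \<le> L"
  show "fst (f t) \<in> Q"
  proof (cases t)
    case 0 then show ?thesis using f0 by simp
  next
    case (Suc s)
    then have "(f s, f t) \<in> step \<gamma>" using walk t by simp
    then show ?thesis using step_props(2)[OF pv] by blast
  qed
qed

lemma walk_sb:
  assumes pv: "pvass Q \<gamma> W" and walk: "\<forall>t<L. (f t, f (Suc t)) \<in> step \<gamma>"
  shows "\<forall>t<L. \<bar>int (snd (f (Suc t))) - int (snd (f t))\<bar> \<le> 1"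
  using walk step_props(1)[OF pv] by blast

lemma period_lemma:
  assumes pv: "pvass Q \<gamma> W" and pQ: "p \<in> Q"
    and inf: "infinite (post_star Q \<gamma> {(p, 0)})"
    and sub: "post_star Q \<gamma> {(p, 0)} \<subseteq> pre_star Q \<gamma> {(p, 0)}"
  shows "\<exists>g. 0 < g \<and> g \<le> card Q \<and> (\<forall>k. ((p,0),(p, k * g)) \<in> (step \<gamma>)\<^sup>*)"
proof -
  define P where "P = post_star Q \<gamma> {(p, 0)}"
  define n where "n = card Q"
  have fin: "finite Q" using pv unfolding pvass_def by simp
  have SE: "(trans_rel \<gamma>)\<^sup>* = (step \<gamma>)\<^sup>*" by (rule star_eq[OF pv])
  have "\<exists>x\<in>P. n \<le> snd x"
  proof (rule ccontr)
    assume "\<not> (\<exists>x\<in>P. n \<le> snd x)"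
    then have "P \<subseteq> Q \<times> {..<n}" unfolding P_def post_star_def by (auto simp: not_le)
    then have "finite P" using fin by (meson finite_SigmaI finite_lessThan finite_subset)
    then show False using inf unfolding P_def by simp
  qed
  then obtain s m where sm: "(s,m) \<in> P" "n \<le> m" by auto
  have r1: "((p,0),(s,m)) \<in> (step \<gamma>)\<^sup>*" using sm(1) SE unfolding P_def post_star_def by auto
  have r2: "((s,m),(p,0)) \<in> (step \<gamma>)\<^sup>*" using sm(1) sub SE unfolding P_def pre_star_def by auto
  obtain L0 where "((p,0),(s,m)) \<in> step \<gamma> ^^ L0" using r1 rtrancl_power by blast
  then obtain f where f: "f 0 = (p,0)" "f L0 = (s,m)" "\<forall>i<L0. (f i, f (Suc i)) \<in> step \<gamma>"
    unfolding relpow_fun_conv by blast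
  have Qf: "\<forall>t\<le>L0. fst (f t) \<in> Q" by (rule walk_Q[OF pv f(3)]) (use f(1) pQ in simp)
  have sbf: "\<forall>t<L0. \<bar>int (snd (f (Suc t))) - int (snd (f t))\<bar> \<le> 1" by (rule walk_sb[OF pv f(3)])
  have stp: "\<forall>t. 0 \<le> t \<longrightarrow> t < L0 \<longrightarrow> \<bar>(\<lambda>t. int (snd (f t))) (Suc t) - (\<lambda>t. int (snd (f t))) t\<bar> \<le> 1"
    using sbf by simp
  have lvl: "(\<lambda>t. int (snd (f t))) 0 + int n \<le> (\<lambda>t. int (snd (f t))) L0" using f sm(2) by simp
  have Q1: "\<forall>t. 0 \<le> t \<longrightarrow> t \<le> L0 \<longrightarrow> (\<lambda>t. fst (f t)) t \<in> Q" using Qf by simp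
  obtain i j where ij: "0 \<le> i" "i < j" "j \<le> L0" "fst (f i) = fst (f j)"
      "0 < int (snd (f j)) - int (snd (f i))" "int (snd (f j)) - int (snd (f i)) \<le> int n"
    using cycle_up[where lv="\<lambda>t. int (snd (f t))" and st="\<lambda>t. fst (f t)", OF stp _ lvl Q1 fin] unfolding n_def
    by auto
  define g where "g = snd (f j) - snd (f i)"
  define u where "u = fst (f i)"
  define li where "li = snd (f i)"
  have g0: "0 < g" "g \<le> n" using ij(5,6) unfolding g_def by auto
  have fi: "f i = (u, li)" unfolding u_def li_def by simp
  have fj: "f j = (u, li + g)" using ij(4,5) unfolding u_def li_def g_def by (simp add: prod_eq_iff)
  have cyc: "((u, li), (u, li + g)) \<in> (step \<gamma>)\<^sup>*"
    using walk_seg[OF f(3) less_imp_le[OF ij(2)] ij(3)] fi fj rtrancl_power by metis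
  have iter: "((u, li), (u, li + k * g)) \<in> (step \<gamma>)\<^sup>*" for k
  proof (induction k)
    case 0 then show ?case by simp
  next
    case (Suc k)
    have "((u, li + k * g), (u, li + g + k * g)) \<in> (step \<gamma>)\<^sup>*" by (rule step_up_star[OF cyc])
    then have "((u, li + k * g), (u, li + Suc k * g)) \<in> (step \<gamma>)\<^sup>*" by (simp add: algebra_simps)
    then show ?case using Suc.IH by (rule rtrancl_trans[rotated])
  qed
  have pr0: "((p,0),(u, li)) \<in> (step \<gamma>)\<^sup>*"
    using walk_seg[OF f(3), of 0 i] ij f(1) fi rtrancl_power by (metis less_imp_le order_trans minus_nat.diff_0)
  have bk: "((u, li + g), (p, 0)) \<in> (step \<gamma>)\<^sup>*"
  proof -
    have "(f j, f L0) \<in> step \<gamma> ^^ (L0 - j)" by (rule walk_seg[OF f(3) _ order_refl]) (use ij in simp)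
    then have "(f j, (s,m)) \<in> (step \<gamma>)\<^sup>*" using f(2) rtrancl_power by metis
    then show ?thesis using r2 fj by (metis rtrancl_trans)
  qed
  have "((p,0),(p, k * g)) \<in> (step \<gamma>)\<^sup>*" for k
  proof -
    have a1: "((p,0),(u, li + Suc k * g)) \<in> (step \<gamma>)\<^sup>*" using pr0 iter[of "Suc k"] by (rule rtrancl_trans)
    have "((u, li + g + k * g), (p, 0 + k * g)) \<in> (step \<gamma>)\<^sup>*" by (rule step_up_star[OF bk])
    then have a2: "((u, li + Suc k * g), (p, k * g)) \<in> (step \<gamma>)\<^sup>*" by (simp add: algebra_simps)
    show ?thesis using a1 a2 by (rule rtrancl_trans)
  qed
  then show ?thesis using g0 unfolding n_def by blast
qed

theorem mainTheorem6:
  fixes Q :: "'q set" and \<gamma> :: "('q \<times> int \<times> 'q) set" and W :: "'q \<times> int \<times> 'q \<Rightarrow> nat"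
    and R :: "('q \<times> nat) set"
  assumes "pvass Q \<gamma> W"
    and "is_bscc Q \<gamma> C" and "p \<in> C"
    and "R = type2_region Q \<gamma> p"
    and "R \<noteq> {}"
    and "c \<in> pre_star Q \<gamma> R"
  shows "\<exists>n \<le> 4 * card Q ^ 3. \<exists>c'\<in>R. (c, c') \<in> trans_rel \<gamma> ^^ n"
proof -
  note pv = assms(1)
  have pQ: "p \<in> Q" using assms(2,3) unfolding is_bscc_def by auto
  have fin: "finite Q" using pv unfolding pvass_def by simp
  have SE: "(trans_rel \<gamma>)\<^sup>* = (step \<gamma>)\<^sup>*" by (rule star_eq[OF pv])
  define P where "P = post_star Q \<gamma> {(p, 0)}"
  have cond: "infinite P \<and> P \<subseteq> pre_star Q \<gamma> {(p, 0)}"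
    using assms(4,5) unfolding type2_region_def P_def by (auto split: if_splits)
  have RP: "R = P" using assms(4) cond unfolding type2_region_def P_def by simp
  obtain g where g: "0 < g" "g \<le> card Q" "\<forall>k. ((p,0),(p, k * g)) \<in> (step \<gamma>)\<^sup>*"
    using period_lemma[OF pv pQ] cond unfolding P_def by blast
  obtain x where x: "x \<in> R" "(c, x) \<in> (trans_rel \<gamma>)\<^sup>*" and cQ: "fst c \<in> Q"
    using assms(6) unfolding pre_star_def by auto
  have "(x, (p,0)) \<in> (trans_rel \<gamma>)\<^sup>*" using x(1) RP cond unfolding pre_star_def by auto
  then have "(c, (p,0)) \<in> (step \<gamma>)\<^sup>*" using x(2) SE by (metis rtrancl_trans)
  then obtain L0 where L0: "(c, (p,0)) \<in> step \<gamma> ^^ L0" using rtrancl_power by blast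
  define Ls where "Ls = {L. \<exists>m. g dvd m \<and> (c, (p, m)) \<in> step \<gamma> ^^ L}"
  have L0s: "L0 \<in> Ls" unfolding Ls_def using L0 by auto
  define L where "L = Least (\<lambda>L. L \<in> Ls)"
  have LL: "L \<in> Ls" unfolding L_def using L0s by (rule LeastI)
  then obtain m where m: "g dvd m" "(c, (p, m)) \<in> step \<gamma> ^^ L" unfolding Ls_def by blast
  have minimal: "\<forall>L' m. (c, (p, m)) \<in> step \<gamma> ^^ L' \<longrightarrow> g dvd m \<longrightarrow> L \<le> L'"
  proof (intro allI impI)
    fix L' m' assume "(c, (p, m')) \<in> step \<gamma> ^^ L'" "g dvd m'"
    then have "L' \<in> Ls" unfolding Ls_def by blast
    then show "L \<le> L'" unfolding L_def by (rule Least_le)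
  qed
  obtain f where f: "f 0 = c" "f L = (p, m)" "\<forall>i<L. (f i, f (Suc i)) \<in> step \<gamma>"
    using m(2) unfolding relpow_fun_conv by blast
  have Qf: "\<forall>t\<le>L. fst (f t) \<in> Q" by (rule walk_Q[OF pv f(3)]) (use f(1) cQ in simp)
  have sbf: "\<forall>t<L. \<bar>int (snd (f (Suc t))) - int (snd (f t))\<bar> \<le> 1" by (rule walk_sb[OF pv f(3)])
  interpret mw: mwalk \<gamma> Q f L p g "card Q"
  proof
    show "\<forall>t<L. (f t, f (Suc t)) \<in> step \<gamma>" by (rule f(3))
    show "fst (f L) = p" using f(2) by simp
    show "g dvd snd (f L)" using f(2) m(1) by simp
    show "\<forall>L' m. (f 0, (p, m)) \<in> step \<gamma> ^^ L' \<longrightarrow> g dvd m \<longrightarrow> L \<le> L'" using minimal f(1) by simp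
    show "0 < g" by (rule g(1))
    show "g \<le> card Q" by (rule g(2))
    show "\<forall>t\<le>L. fst (f t) \<in> Q" by (rule Qf)
    show "finite Q" by (rule fin)
    show "card Q \<le> card Q" by simp
    show "\<forall>t<L. \<bar>int (snd (f (Suc t))) - int (snd (f t))\<bar> \<le> 1" by (rule sbf)
  qed
  have Lb: "L \<le> 4 * card Q ^ 3" by (rule mw.L_bound)
  obtain k where k: "m = k * g" using m(1) by (metis dvd_def mult.commute)
  have "((p,0),(p,m)) \<in> (trans_rel \<gamma>)\<^sup>*" using g(3) k SE by simp
  then have inR: "(p, m) \<in> R" using RP pQ unfolding P_def post_star_def by auto
  have "(c, (p, m)) \<in> trans_rel \<gamma> ^^ L" by (rule pow_step_trans[OF m(2)])
  then show ?thesis using Lb inR by blast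
qed

end
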